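(* Let $M$ be a monoidal category which admits functorial inverses and let $f:x\to x'$ be a morphism in $M$. Then for all objects $y,z\in M$ the maps $$(-)\otimes f: M(y,z)\to M(y\otimes x, z\otimes x'),\qquad f\otimes(-): M(y,z)\to M(x\otimes y, x'\otimes z)$$ are bijections.
   Context: A monoidal category $M$ admits functorial inverses if there exist a functor $i:M\to M$ and a natural isomorphism $x\otimes i(x)\cong 1$. $M(a,b)$ denotes the set of morphisms from $a$ to $b$ in $M$. *)

theory Defs
  imports Main
begin

text \<open>Categories in the dom/cod style: a set of objects, a set of morphisms,
  domain and codomain maps, identities and composition (Cmp C g f = g after f).\<close>

record ('o, 'm) category =
  Obj :: "'o set"
  Mor :: "'m set"
  Dom :: "'m \<Rightarrow> 'o"
  Cod :: "'m \<Rightarrow> 'o"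
  Idm :: "'o \<Rightarrow> 'm"
  Cmp :: "'m \<Rightarrow> 'm \<Rightarrow> 'm"

definition hom :: "('o, 'm, 'x) category_scheme \<Rightarrow> 'o \<Rightarrow> 'o \<Rightarrow> 'm set" where
  "hom C a b = {f \<in> Mor C. Dom C f = a \<and> Cod C f = b}"

locale category =
  fixes C :: "('o, 'm, 'x) category_scheme"
  assumes dom_obj: "f \<in> Mor C \<Longrightarrow> Dom C f \<in> Obj C"
    and cod_obj: "f \<in> Mor C \<Longrightarrow> Cod C f \<in> Obj C"
    and id_hom: "a \<in> Obj C \<Longrightarrow> Idm C a \<in> hom C a a"
    and comp_hom: "\<lbrakk>f \<in> hom C a b; g \<in> hom C b c\<rbrakk> \<Longrightarrow> Cmp C g f \<in> hom C a c"
    and id_left: "f \<in> hom C a b \<Longrightarrow> Cmp C (Idm C b) f = f"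
    and id_right: "f \<in> hom C a b \<Longrightarrow> Cmp C f (Idm C a) = f"
    and comp_assoc: "\<lbrakk>f \<in> hom C a b; g \<in> hom C b c; h \<in> hom C c d\<rbrakk>
       \<Longrightarrow> Cmp C h (Cmp C g f) = Cmp C (Cmp C h g) f"

definition iso_betw :: "('o, 'm, 'x) category_scheme \<Rightarrow> 'm \<Rightarrow> 'o \<Rightarrow> 'o \<Rightarrow> bool" where
  "iso_betw C f a b \<longleftrightarrow> f \<in> hom C a b \<and>
     (\<exists>g \<in> hom C b a. Cmp C g f = Idm C a \<and> Cmp C f g = Idm C b)"

locale monoidal_category = category C
  for C :: "('o, 'm, 'x) category_scheme" +
  fixes T :: "'o \<Rightarrow> 'o \<Rightarrow> 'o"
    and Tm :: "'m \<Rightarrow> 'm \<Rightarrow> 'm"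
    and U :: "'o"
    and Al :: "'o \<Rightarrow> 'o \<Rightarrow> 'o \<Rightarrow> 'm"
    and Lu :: "'o \<Rightarrow> 'm"
    and Ru :: "'o \<Rightarrow> 'm"
  assumes unit_obj: "U \<in> Obj C"
    and T_obj: "\<lbrakk>a \<in> Obj C; b \<in> Obj C\<rbrakk> \<Longrightarrow> T a b \<in> Obj C"
    and Tm_hom: "\<lbrakk>f \<in> hom C a a'; g \<in> hom C b b'\<rbrakk> \<Longrightarrow> Tm f g \<in> hom C (T a b) (T a' b')"
    and Tm_id: "\<lbrakk>a \<in> Obj C; b \<in> Obj C\<rbrakk> \<Longrightarrow> Tm (Idm C a) (Idm C b) = Idm C (T a b)"
    and Tm_comp: "\<lbrakk>f \<in> hom C a b; f' \<in> hom C b c; g \<in> hom C a' b'; g' \<in> hom C b' c'\<rbrakk>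
       \<Longrightarrow> Tm (Cmp C f' f) (Cmp C g' g) = Cmp C (Tm f' g') (Tm f g)"
    and Al_iso: "\<lbrakk>a \<in> Obj C; b \<in> Obj C; c \<in> Obj C\<rbrakk>
       \<Longrightarrow> iso_betw C (Al a b c) (T (T a b) c) (T a (T b c))"
    and Al_nat: "\<lbrakk>f \<in> hom C a a'; g \<in> hom C b b'; h \<in> hom C c c'\<rbrakk>
       \<Longrightarrow> Cmp C (Al a' b' c') (Tm (Tm f g) h) = Cmp C (Tm f (Tm g h)) (Al a b c)"
    and Lu_iso: "a \<in> Obj C \<Longrightarrow> iso_betw C (Lu a) (T U a) a"
    and Lu_nat: "f \<in> hom C a a' \<Longrightarrow> Cmp C f (Lu a) = Cmp C (Lu a') (Tm (Idm C U) f)"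
    and Ru_iso: "a \<in> Obj C \<Longrightarrow> iso_betw C (Ru a) (T a U) a"
    and Ru_nat: "f \<in> hom C a a' \<Longrightarrow> Cmp C f (Ru a) = Cmp C (Ru a') (Tm f (Idm C U))"
    and pentagon: "\<lbrakk>a \<in> Obj C; b \<in> Obj C; c \<in> Obj C; d \<in> Obj C\<rbrakk> \<Longrightarrow>
       Cmp C (Tm (Idm C a) (Al b c d)) (Cmp C (Al a (T b c) d) (Tm (Al a b c) (Idm C d)))
       = Cmp C (Al a b (T c d)) (Al (T a b) c d)"
    and triangle: "\<lbrakk>a \<in> Obj C; b \<in> Obj C\<rbrakk> \<Longrightarrow>
       Cmp C (Tm (Idm C a) (Lu b)) (Al a U b) = Tm (Ru a) (Idm C b)"

definition endofunctor :: "('o, 'm, 'x) category_scheme \<Rightarrow> ('o \<Rightarrow> 'o) \<Rightarrow> ('m \<Rightarrow> 'm) \<Rightarrow> bool" where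
  "endofunctor C Fo Fm \<longleftrightarrow>
     (\<forall>a \<in> Obj C. Fo a \<in> Obj C) \<and>
     (\<forall>a b f. f \<in> hom C a b \<longrightarrow> Fm f \<in> hom C (Fo a) (Fo b)) \<and>
     (\<forall>a \<in> Obj C. Fm (Idm C a) = Idm C (Fo a)) \<and>
     (\<forall>a b c f g. f \<in> hom C a b \<longrightarrow> g \<in> hom C b c \<longrightarrow> Fm (Cmp C g f) = Cmp C (Fm g) (Fm f))"

text \<open>Functorial inverses: a functor i and a natural isomorphism
  eta x : x \<otimes> i(x) \<rightarrow> 1 (natural transformation from x \<mapsto> x \<otimes> i(x) to the constant functor 1).\<close>

definition admits_functorial_inverses ::
  "('o, 'm, 'x) category_scheme \<Rightarrow> ('o \<Rightarrow> 'o \<Rightarrow> 'o) \<Rightarrow> ('m \<Rightarrow> 'm \<Rightarrow> 'm) \<Rightarrow> 'o \<Rightarrow> bool" where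
  "admits_functorial_inverses C T Tm U \<longleftrightarrow>
     (\<exists>io im eta. endofunctor C io im \<and>
        (\<forall>x \<in> Obj C. iso_betw C (eta x) (T x (io x)) U) \<and>
        (\<forall>x x' f. f \<in> hom C x x' \<longrightarrow>
            Cmp C (eta x') (Tm f (im f)) = Cmp C (Idm C U) (eta x)))"

end

theory Submission
  imports Defs
begin

context category begin

lemma hom_objs: "f \<in> hom C a b \<Longrightarrow> a \<in> Obj C \<and> b \<in> Obj C"
  using dom_obj cod_obj by (auto simp: hom_def)

lemma iso_hom: "iso_betw C f a b \<Longrightarrow> f \<in> hom C a b"
  by (simp add: iso_betw_def)

lemma iso_epi:
  assumes t: "iso_betw C t a b" and g: "g \<in> hom C b c" "g' \<in> hom C b c"
    and eq: "Cmp C g t = Cmp C g' t"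
  shows "g = g'"
proof -
  obtain s where s: "s \<in> hom C b a" "Cmp C t s = Idm C b" and th: "t \<in> hom C a b"
    using t unfolding iso_betw_def by blast
  have "g = Cmp C g (Cmp C t s)" using s g id_right by simp
  also have "\<dots> = Cmp C (Cmp C g t) s" using comp_assoc[OF s(1) th g(1)] .
  also have "\<dots> = Cmp C (Cmp C g' t) s" using eq by simp
  also have "\<dots> = Cmp C g' (Cmp C t s)" using comp_assoc[OF s(1) th g(2)] by simp
  also have "\<dots> = g'" using s g id_right by simp
  finally show ?thesis .
qed

lemma iso_mono:
  assumes t: "iso_betw C t a b" and g: "g \<in> hom C c a" "g' \<in> hom C c a"
    and eq: "Cmp C t g = Cmp C t g'"
  shows "g = g'"
proof -
  obtain s where s: "s \<in> hom C b a" "Cmp C s t = Idm C a" and th: "t \<in> hom C a b"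
    using t unfolding iso_betw_def by blast
  have "g = Cmp C (Cmp C s t) g" using s g id_left by simp
  also have "\<dots> = Cmp C s (Cmp C t g)" using comp_assoc[OF g(1) th s(1)] by simp
  also have "\<dots> = Cmp C s (Cmp C t g')" using eq by simp
  also have "\<dots> = Cmp C (Cmp C s t) g'" using comp_assoc[OF g(2) th s(1)] .
  also have "\<dots> = g'" using s g id_left by simp
  finally show ?thesis .
qed

lemma iso_comp:
  assumes f: "iso_betw C f a b" and g: "iso_betw C g b c"
  shows "iso_betw C (Cmp C g f) a c"
proof -
  obtain f' where f': "f' \<in> hom C b a" "Cmp C f' f = Idm C a" "Cmp C f f' = Idm C b" and fh: "f \<in> hom C a b"
    using f unfolding iso_betw_def by blast
  obtain g' where g': "g' \<in> hom C c b" "Cmp C g' g = Idm C b" "Cmp C g g' = Idm C c" and gh: "g \<in> hom C b c"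
    using g unfolding iso_betw_def by blast
  have "Cmp C (Cmp C f' g') (Cmp C g f) = Cmp C f' (Cmp C g' (Cmp C g f))"
    using comp_assoc[OF comp_hom[OF fh gh] g'(1) f'(1)] by simp
  also have "\<dots> = Cmp C f' (Cmp C (Cmp C g' g) f)" using comp_assoc[OF fh gh g'(1)] by simp
  also have "\<dots> = Idm C a" using g' f' id_left[OF fh] by simp
  finally have 1: "Cmp C (Cmp C f' g') (Cmp C g f) = Idm C a" .
  have "Cmp C (Cmp C g f) (Cmp C f' g') = Cmp C g (Cmp C f (Cmp C f' g'))"
    using comp_assoc[OF comp_hom[OF g'(1) f'(1)] fh gh] by simp
  also have "\<dots> = Cmp C g (Cmp C (Cmp C f f') g')" using comp_assoc[OF g'(1) f'(1) fh] by simp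
  also have "\<dots> = Idm C c" using g' f' id_left[OF g'(1)] by simp
  finally have 2: "Cmp C (Cmp C g f) (Cmp C f' g') = Idm C c" .
  show ?thesis unfolding iso_betw_def
    using 1 2 comp_hom[OF fh gh] comp_hom[OF g'(1) f'(1)] by blast
qed

lemma iso_id: "a \<in> Obj C \<Longrightarrow> iso_betw C (Idm C a) a a"
  unfolding iso_betw_def using id_hom id_left by blast

lemma iso_sym: "iso_betw C f a b \<Longrightarrow> \<exists>g. iso_betw C g b a"
  unfolding iso_betw_def by blast

lemma inv_nat:
  assumes al: "al \<in> hom C A B" and be: "be \<in> hom C B A" "Cmp C al be = Idm C B"
    and al': "al' \<in> hom C A' B'" and be': "be' \<in> hom C B' A'" "Cmp C be' al' = Idm C A'"
    and u: "u \<in> hom C A A'" and v: "v \<in> hom C B B'"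
    and nat: "Cmp C al' u = Cmp C v al"
  shows "Cmp C be' v = Cmp C u be"
proof -
  have "Cmp C be' v = Cmp C (Cmp C be' v) (Cmp C al be)"
    using be id_right comp_hom[OF v be'(1)] by simp
  also have "\<dots> = Cmp C (Cmp C (Cmp C be' v) al) be"
    using comp_assoc[OF be(1) al comp_hom[OF v be'(1)]] .
  also have "Cmp C (Cmp C be' v) al = Cmp C be' (Cmp C v al)"
    using comp_assoc[OF al v be'(1)] by simp
  also have "\<dots> = Cmp C be' (Cmp C al' u)" using nat by simp
  also have "\<dots> = Cmp C (Cmp C be' al') u" using comp_assoc[OF u al' be'(1)] .
  also have "\<dots> = u" using be' id_left[OF u] by simp
  finally show ?thesis .
qed

lemma nat_iso_faithful:
  assumes th: "\<And>y. y \<in> Obj C \<Longrightarrow> iso_betw C (\<theta> y) (Go (Fo y)) y"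
    and nat: "\<And>y z g. g \<in> hom C y z \<Longrightarrow> Cmp C (\<theta> z) (Gm (Fm g)) = Cmp C g (\<theta> y)"
    and g: "g \<in> hom C y z" "g' \<in> hom C y z" and eq: "Fm g = Fm g'"
  shows "g = g'"
proof -
  have y: "y \<in> Obj C" using hom_objs[OF g(1)] by simp
  have "Cmp C g (\<theta> y) = Cmp C g' (\<theta> y)" using nat[OF g(1)] nat[OF g(2)] eq by simp
  thus ?thesis using iso_epi[OF th[OF y] g] by simp
qed

lemma nat_iso_full:
  assumes F: "endofunctor C Fo Fm" and G: "endofunctor C Go Gm"
    and th: "\<And>y. y \<in> Obj C \<Longrightarrow> iso_betw C (\<theta> y) (Go (Fo y)) y"
    and nat: "\<And>y z g. g \<in> hom C y z \<Longrightarrow> Cmp C (\<theta> z) (Gm (Fm g)) = Cmp C g (\<theta> y)"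
    and Gf: "\<And>h h'. h \<in> hom C (Fo y) (Fo z) \<Longrightarrow> h' \<in> hom C (Fo y) (Fo z) \<Longrightarrow> Gm h = Gm h' \<Longrightarrow> h = h'"
    and y: "y \<in> Obj C" and z: "z \<in> Obj C" and h: "h \<in> hom C (Fo y) (Fo z)"
  shows "\<exists>g \<in> hom C y z. Fm g = h"
proof -
  obtain s where s: "s \<in> hom C y (Go (Fo y))" "Cmp C s (\<theta> y) = Idm C (Go (Fo y))"
    using th[OF y] unfolding iso_betw_def by blast
  have ty: "\<theta> y \<in> hom C (Go (Fo y)) y" using th[OF y] iso_hom by blast
  have tz: "\<theta> z \<in> hom C (Go (Fo z)) z" using th[OF z] iso_hom by blast
  have Gh: "Gm h \<in> hom C (Go (Fo y)) (Go (Fo z))" using G h unfolding endofunctor_def by blast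
  define g where "g = Cmp C (\<theta> z) (Cmp C (Gm h) s)"
  have gh: "g \<in> hom C y z" unfolding g_def using comp_hom[OF comp_hom[OF s(1) Gh] tz] .
  have Fg: "Fm g \<in> hom C (Fo y) (Fo z)" using F gh unfolding endofunctor_def by blast
  have GFg: "Gm (Fm g) \<in> hom C (Go (Fo y)) (Go (Fo z))" using G Fg unfolding endofunctor_def by blast
  have "Cmp C (\<theta> z) (Gm (Fm g)) = Cmp C g (\<theta> y)" using nat[OF gh] .
  also have "\<dots> = Cmp C (\<theta> z) (Cmp C (Cmp C (Gm h) s) (\<theta> y))"
    unfolding g_def using comp_assoc[OF ty comp_hom[OF s(1) Gh] tz] by simp
  also have "Cmp C (Cmp C (Gm h) s) (\<theta> y) = Gm h"
    using comp_assoc[OF ty s(1) Gh] s(2) id_right[OF Gh] by simp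
  finally have "Gm (Fm g) = Gm h" using iso_mono[OF th[OF z] GFg Gh] by simp
  hence "Fm g = h" using Gf[OF Fg h] by simp
  thus ?thesis using gh by blast
qed

end

context monoidal_category begin

lemma idh: "a \<in> Obj C \<Longrightarrow> Idm C a \<in> hom C a a" using id_hom .

lemma Tm_iso:
  assumes f: "iso_betw C f a a'" and g: "iso_betw C g b b'"
  shows "iso_betw C (Tm f g) (T a b) (T a' b')"
proof -
  obtain f' where f': "f' \<in> hom C a' a" "Cmp C f' f = Idm C a" "Cmp C f f' = Idm C a'" and fh: "f \<in> hom C a a'"
    using f unfolding iso_betw_def by blast
  obtain g' where g': "g' \<in> hom C b' b" "Cmp C g' g = Idm C b" "Cmp C g g' = Idm C b'" and gh: "g \<in> hom C b b'"
    using g unfolding iso_betw_def by blast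
  have o: "a \<in> Obj C" "a' \<in> Obj C" "b \<in> Obj C" "b' \<in> Obj C" using hom_objs fh gh by auto
  have 1: "Cmp C (Tm f' g') (Tm f g) = Idm C (T a b)"
    using Tm_comp[OF fh f'(1) gh g'(1)] f' g' Tm_id o by simp
  have 2: "Cmp C (Tm f g) (Tm f' g') = Idm C (T a' b')"
    using Tm_comp[OF f'(1) fh g'(1) gh] f' g' Tm_id o by simp
  show ?thesis unfolding iso_betw_def using 1 2 Tm_hom[OF fh gh] Tm_hom[OF f'(1) g'(1)] by blast
qed

lemma idid: "a \<in> Obj C \<Longrightarrow> Cmp C (Idm C a) (Idm C a) = Idm C a"
  using id_left[OF id_hom] by simp

lemma R_functor: "a \<in> Obj C \<Longrightarrow> endofunctor C (\<lambda>y. T y a) (\<lambda>g. Tm g (Idm C a))"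
  unfolding endofunctor_def
proof (intro conjI allI ballI impI)
  fix y assume "a \<in> Obj C" "y \<in> Obj C" thus "T y a \<in> Obj C" using T_obj by simp
next
  fix b c f assume "a \<in> Obj C" "f \<in> hom C b c"
  thus "Tm f (Idm C a) \<in> hom C (T b a) (T c a)" using Tm_hom id_hom by blast
next
  fix y assume "a \<in> Obj C" "y \<in> Obj C" thus "Tm (Idm C y) (Idm C a) = Idm C (T y a)" using Tm_id by simp
next
  fix b c d f g assume a: "a \<in> Obj C" and f: "f \<in> hom C b c" and g: "g \<in> hom C c d"
  show "Tm (Cmp C g f) (Idm C a) = Cmp C (Tm g (Idm C a)) (Tm f (Idm C a))"
    using Tm_comp[OF f g id_hom[OF a] id_hom[OF a]] idid[OF a] by simp
qed

lemma L_functor: "a \<in> Obj C \<Longrightarrow> endofunctor C (\<lambda>y. T a y) (\<lambda>g. Tm (Idm C a) g)"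
  unfolding endofunctor_def
proof (intro conjI allI ballI impI)
  fix y assume "a \<in> Obj C" "y \<in> Obj C" thus "T a y \<in> Obj C" using T_obj by simp
next
  fix b c f assume "a \<in> Obj C" "f \<in> hom C b c"
  thus "Tm (Idm C a) f \<in> hom C (T a b) (T a c)" using Tm_hom id_hom by blast
next
  fix y assume "a \<in> Obj C" "y \<in> Obj C" thus "Tm (Idm C a) (Idm C y) = Idm C (T a y)" using Tm_id by simp
next
  fix b c d f g assume a: "a \<in> Obj C" and f: "f \<in> hom C b c" and g: "g \<in> hom C c d"
  show "Tm (Idm C a) (Cmp C g f) = Cmp C (Tm (Idm C a) g) (Tm (Idm C a) f)"
    using Tm_comp[OF id_hom[OF a] id_hom[OF a] f g] idid[OF a] by simp
qed

lemma R_natiso: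
  assumes a: "a \<in> Obj C" and b: "b \<in> Obj C" and e: "iso_betw C e (T a b) U"
  shows "\<exists>\<theta>. (\<forall>y\<in>Obj C. iso_betw C (\<theta> y) (T (T y a) b) y) \<and>
    (\<forall>y z g. g \<in> hom C y z \<longrightarrow> Cmp C (\<theta> z) (Tm (Tm g (Idm C a)) (Idm C b)) = Cmp C g (\<theta> y))"
proof -
  define \<theta> where "\<theta> = (\<lambda>y. Cmp C (Ru y) (Cmp C (Tm (Idm C y) e) (Al y a b)))"
  have eh: "e \<in> hom C (T a b) U" using e iso_hom by blast
  have iso: "iso_betw C (\<theta> y) (T (T y a) b) y" if y: "y \<in> Obj C" for y
    unfolding \<theta>_def
    by (rule iso_comp[OF iso_comp[OF Al_iso[OF y a b] Tm_iso[OF iso_id[OF y] e]] Ru_iso[OF y]])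
  have nat: "Cmp C (\<theta> z) (Tm (Tm g (Idm C a)) (Idm C b)) = Cmp C g (\<theta> y)" if g: "g \<in> hom C y z" for y z g
  proof -
    have y: "y \<in> Obj C" and z: "z \<in> Obj C" using hom_objs[OF g] by auto
    note ia = id_hom[OF a] and ib = id_hom[OF b] and iy = id_hom[OF y] and iz = id_hom[OF z]
    note iU = id_hom[OF unit_obj]
    have ab: "T a b \<in> Obj C" using T_obj a b by simp
    note iab = id_hom[OF ab]
    have X: "Tm (Tm g (Idm C a)) (Idm C b) \<in> hom C (T (T y a) b) (T (T z a) b)"
      using Tm_hom[OF Tm_hom[OF g ia] ib] .
    have Az: "Al z a b \<in> hom C (T (T z a) b) (T z (T a b))" using Al_iso[OF z a b] iso_hom by blast
    have Ay: "Al y a b \<in> hom C (T (T y a) b) (T y (T a b))" using Al_iso[OF y a b] iso_hom by blast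
    have Ez: "Tm (Idm C z) e \<in> hom C (T z (T a b)) (T z U)" using Tm_hom[OF iz eh] .
    have Ey: "Tm (Idm C y) e \<in> hom C (T y (T a b)) (T y U)" using Tm_hom[OF iy eh] .
    have Rz: "Ru z \<in> hom C (T z U) z" using Ru_iso[OF z] iso_hom by blast
    have Ry: "Ru y \<in> hom C (T y U) y" using Ru_iso[OF y] iso_hom by blast
    have gab: "Tm g (Idm C (T a b)) \<in> hom C (T y (T a b)) (T z (T a b))" using Tm_hom[OF g iab] .
    have gU: "Tm g (Idm C U) \<in> hom C (T y U) (T z U)" using Tm_hom[OF g iU] .
    have s2: "Cmp C (Al z a b) (Tm (Tm g (Idm C a)) (Idm C b)) = Cmp C (Tm g (Idm C (T a b))) (Al y a b)"
      using Al_nat[OF g ia ib] Tm_id[OF a b] by simp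
    have s3: "Cmp C (Tm (Idm C z) e) (Tm g (Idm C (T a b))) = Cmp C (Tm g (Idm C U)) (Tm (Idm C y) e)"
    proof -
      have "Cmp C (Tm (Idm C z) e) (Tm g (Idm C (T a b))) = Tm (Cmp C (Idm C z) g) (Cmp C e (Idm C (T a b)))"
        using Tm_comp[OF g iz iab eh] by simp
      also have "\<dots> = Tm g e" using id_left[OF g] id_right[OF eh] by simp
      also have "\<dots> = Tm (Cmp C g (Idm C y)) (Cmp C (Idm C U) e)" using id_right[OF g] id_left[OF eh] by simp
      also have "\<dots> = Cmp C (Tm g (Idm C U)) (Tm (Idm C y) e)" using Tm_comp[OF iy g eh iU] .
      finally show ?thesis .
    qed
    have "Cmp C (\<theta> z) (Tm (Tm g (Idm C a)) (Idm C b))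
        = Cmp C (Ru z) (Cmp C (Cmp C (Tm (Idm C z) e) (Al z a b)) (Tm (Tm g (Idm C a)) (Idm C b)))"
      unfolding \<theta>_def using comp_assoc[OF X comp_hom[OF Az Ez] Rz] by simp
    also have "Cmp C (Cmp C (Tm (Idm C z) e) (Al z a b)) (Tm (Tm g (Idm C a)) (Idm C b))
        = Cmp C (Tm (Idm C z) e) (Cmp C (Tm g (Idm C (T a b))) (Al y a b))"
      using comp_assoc[OF X Az Ez] s2 by simp
    also have "\<dots> = Cmp C (Cmp C (Tm g (Idm C U)) (Tm (Idm C y) e)) (Al y a b)"
      using comp_assoc[OF Ay gab Ez] s3 by simp
    also have "\<dots> = Cmp C (Tm g (Idm C U)) (Cmp C (Tm (Idm C y) e) (Al y a b))"
      using comp_assoc[OF Ay Ey gU] by simp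
    also have "Cmp C (Ru z) \<dots> = Cmp C (Cmp C (Ru z) (Tm g (Idm C U))) (Cmp C (Tm (Idm C y) e) (Al y a b))"
      using comp_assoc[OF comp_hom[OF Ay Ey] gU Rz] .
    also have "\<dots> = Cmp C (Cmp C g (Ru y)) (Cmp C (Tm (Idm C y) e) (Al y a b))"
      using Ru_nat[OF g] by simp
    also have "\<dots> = Cmp C g (\<theta> y)"
      unfolding \<theta>_def using comp_assoc[OF comp_hom[OF Ay Ey] Ry g] by simp
    finally show ?thesis .
  qed
  show ?thesis using iso nat by blast
qed

lemma L_natiso:
  assumes a: "a \<in> Obj C" and c: "c \<in> Obj C" and e: "iso_betw C e (T c a) U"
  shows "\<exists>\<theta>. (\<forall>y\<in>Obj C. iso_betw C (\<theta> y) (T c (T a y)) y) \<and>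
    (\<forall>y z g. g \<in> hom C y z \<longrightarrow> Cmp C (\<theta> z) (Tm (Idm C c) (Tm (Idm C a) g)) = Cmp C g (\<theta> y))"
proof -
  have "\<forall>y. \<exists>s. y \<in> Obj C \<longrightarrow> (s \<in> hom C (T c (T a y)) (T (T c a) y) \<and> Cmp C s (Al c a y) = Idm C (T (T c a) y)
     \<and> Cmp C (Al c a y) s = Idm C (T c (T a y)))"
    using Al_iso[OF c a] unfolding iso_betw_def by blast
  then obtain Ai where Ai: "\<And>y. y \<in> Obj C \<Longrightarrow> Ai y \<in> hom C (T c (T a y)) (T (T c a) y) \<and> Cmp C (Ai y) (Al c a y) = Idm C (T (T c a) y)
     \<and> Cmp C (Al c a y) (Ai y) = Idm C (T c (T a y))"
    by metis
  have Aiiso: "iso_betw C (Ai y) (T c (T a y)) (T (T c a) y)" if y: "y \<in> Obj C" for y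
    unfolding iso_betw_def using Ai[OF y] Al_iso[OF c a y] iso_hom by blast
  define \<theta> where "\<theta> = (\<lambda>y. Cmp C (Lu y) (Cmp C (Tm e (Idm C y)) (Ai y)))"
  have eh: "e \<in> hom C (T c a) U" using e iso_hom by blast
  have iso: "iso_betw C (\<theta> y) (T c (T a y)) y" if y: "y \<in> Obj C" for y
    unfolding \<theta>_def
    by (rule iso_comp[OF iso_comp[OF Aiiso[OF y] Tm_iso[OF e iso_id[OF y]]] Lu_iso[OF y]])
  have nat: "Cmp C (\<theta> z) (Tm (Idm C c) (Tm (Idm C a) g)) = Cmp C g (\<theta> y)" if g: "g \<in> hom C y z" for y z g
  proof -
    have y: "y \<in> Obj C" and z: "z \<in> Obj C" using hom_objs[OF g] by auto
    note ia = id_hom[OF a] and ic = id_hom[OF c] and iy = id_hom[OF y] and iz = id_hom[OF z]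
    note iU = id_hom[OF unit_obj]
    have ca: "T c a \<in> Obj C" using T_obj a c by simp
    note ica = id_hom[OF ca]
    have X: "Tm (Idm C c) (Tm (Idm C a) g) \<in> hom C (T c (T a y)) (T c (T a z))"
      using Tm_hom[OF ic Tm_hom[OF ia g]] .
    have X': "Tm (Tm (Idm C c) (Idm C a)) g \<in> hom C (T (T c a) y) (T (T c a) z)"
      using Tm_hom[OF Tm_hom[OF ic ia] g] .
    have Az: "Ai z \<in> hom C (T c (T a z)) (T (T c a) z)" using Ai[OF z] by blast
    have Ay: "Ai y \<in> hom C (T c (T a y)) (T (T c a) y)" using Ai[OF y] by blast
    have Ez: "Tm e (Idm C z) \<in> hom C (T (T c a) z) (T U z)" using Tm_hom[OF eh iz] .
    have Ey: "Tm e (Idm C y) \<in> hom C (T (T c a) y) (T U y)" using Tm_hom[OF eh iy] .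
    have Rz: "Lu z \<in> hom C (T U z) z" using Lu_iso[OF z] iso_hom by blast
    have Ry: "Lu y \<in> hom C (T U y) y" using Lu_iso[OF y] iso_hom by blast
    have gab: "Tm (Idm C (T c a)) g \<in> hom C (T (T c a) y) (T (T c a) z)" using Tm_hom[OF ica g] .
    have gU: "Tm (Idm C U) g \<in> hom C (T U y) (T U z)" using Tm_hom[OF iU g] .
    have Aly: "Al c a y \<in> hom C (T (T c a) y) (T c (T a y))" using Al_iso[OF c a y] iso_hom by blast
    have Alz: "Al c a z \<in> hom C (T (T c a) z) (T c (T a z))" using Al_iso[OF c a z] iso_hom by blast
    have s2: "Cmp C (Ai z) (Tm (Idm C c) (Tm (Idm C a) g)) = Cmp C (Tm (Idm C (T c a)) g) (Ai y)"
      using inv_nat[OF Aly Ay _ Alz Az _ X' X] Al_nat[OF ic ia g] Ai[OF y] Ai[OF z] Tm_id[OF c a] by simp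
    have s3: "Cmp C (Tm e (Idm C z)) (Tm (Idm C (T c a)) g) = Cmp C (Tm (Idm C U) g) (Tm e (Idm C y))"
    proof -
      have "Cmp C (Tm e (Idm C z)) (Tm (Idm C (T c a)) g) = Tm (Cmp C e (Idm C (T c a))) (Cmp C (Idm C z) g)"
        using Tm_comp[OF ica eh g iz] by simp
      also have "\<dots> = Tm e g" using id_left[OF g] id_right[OF eh] by simp
      also have "\<dots> = Tm (Cmp C (Idm C U) e) (Cmp C g (Idm C y))" using id_right[OF g] id_left[OF eh] by simp
      also have "\<dots> = Cmp C (Tm (Idm C U) g) (Tm e (Idm C y))" using Tm_comp[OF eh iU iy g] .
      finally show ?thesis .
    qed
    have "Cmp C (\<theta> z) (Tm (Idm C c) (Tm (Idm C a) g))
        = Cmp C (Lu z) (Cmp C (Cmp C (Tm e (Idm C z)) (Ai z)) (Tm (Idm C c) (Tm (Idm C a) g)))"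
      unfolding \<theta>_def using comp_assoc[OF X comp_hom[OF Az Ez] Rz] by simp
    also have "Cmp C (Cmp C (Tm e (Idm C z)) (Ai z)) (Tm (Idm C c) (Tm (Idm C a) g))
        = Cmp C (Tm e (Idm C z)) (Cmp C (Tm (Idm C (T c a)) g) (Ai y))"
      using comp_assoc[OF X Az Ez] s2 by simp
    also have "\<dots> = Cmp C (Cmp C (Tm (Idm C U) g) (Tm e (Idm C y))) (Ai y)"
      using comp_assoc[OF Ay gab Ez] s3 by simp
    also have "\<dots> = Cmp C (Tm (Idm C U) g) (Cmp C (Tm e (Idm C y)) (Ai y))"
      using comp_assoc[OF Ay Ey gU] by simp
    also have "Cmp C (Lu z) \<dots> = Cmp C (Cmp C (Lu z) (Tm (Idm C U) g)) (Cmp C (Tm e (Idm C y)) (Ai y))"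
      using comp_assoc[OF comp_hom[OF Ay Ey] gU Rz] .
    also have "\<dots> = Cmp C (Cmp C g (Lu y)) (Cmp C (Tm e (Idm C y)) (Ai y))"
      using Lu_nat[OF g] by simp
    also have "\<dots> = Cmp C g (\<theta> y)"
      unfolding \<theta>_def using comp_assoc[OF comp_hom[OF Ay Ey] Ry g] by simp
    finally show ?thesis .
  qed
  show ?thesis using iso nat by blast
qed

end

locale fi = monoidal_category +
  fixes io :: "'o \<Rightarrow> 'o" and im :: "'m \<Rightarrow> 'm" and eta :: "'o \<Rightarrow> 'm"
  assumes io_fun: "endofunctor C io im"
    and eta_iso: "\<forall>x \<in> Obj C. iso_betw C (eta x) (T x (io x)) U"
    and eta_nat: "\<forall>x x' f. f \<in> hom C x x' \<longrightarrow> Cmp C (eta x') (Tm f (im f)) = Cmp C (Idm C U) (eta x)"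
begin

lemma io_obj: "a \<in> Obj C \<Longrightarrow> io a \<in> Obj C" using io_fun unfolding endofunctor_def by blast

definition isoo where "isoo a b \<longleftrightarrow> (\<exists>e. iso_betw C e a b)"

lemma isoo_trans: "isoo a b \<Longrightarrow> isoo b c \<Longrightarrow> isoo a c"
  unfolding isoo_def using iso_comp by blast
lemma isoo_sym: "isoo a b \<Longrightarrow> isoo b a"
  unfolding isoo_def using iso_sym by blast
lemma isoo_Tm: "isoo a a' \<Longrightarrow> isoo b b' \<Longrightarrow> isoo (T a b) (T a' b')"
  unfolding isoo_def using Tm_iso by blast
lemma isoo_refl: "a \<in> Obj C \<Longrightarrow> isoo a a"
  unfolding isoo_def using iso_id by blast

lemma right_inv: "a \<in> Obj C \<Longrightarrow> isoo (T a (io a)) U"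
  unfolding isoo_def using eta_iso by blast

lemma left_inv:
  assumes a: "a \<in> Obj C" shows "isoo (T (io a) a) U"
proof -
  define b where "b = io a"
  define d where "d = io b"
  have b: "b \<in> Obj C" and d: "d \<in> Obj C" using io_obj a b_def d_def by auto
  have ba: "T b a \<in> Obj C" using T_obj a b by simp
  have ea: "isoo (T a b) U" using right_inv[OF a] b_def by simp
  have eb: "isoo (T b d) U" using right_inv[OF b] d_def by simp
  have Ru': "\<And>x. x \<in> Obj C \<Longrightarrow> isoo (T x U) x" unfolding isoo_def using Ru_iso by blast
  have Al': "\<And>x y z. x \<in> Obj C \<Longrightarrow> y \<in> Obj C \<Longrightarrow> z \<in> Obj C \<Longrightarrow> isoo (T (T x y) z) (T x (T y z))"
    unfolding isoo_def using Al_iso by blast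
  have 1: "isoo (T b a) (T (T b a) U)" using isoo_sym[OF Ru'[OF ba]] .
  have 2: "isoo (T (T b a) U) (T (T b a) (T b d))" using isoo_Tm[OF isoo_refl[OF ba] isoo_sym[OF eb]] .
  have 3: "isoo (T (T b a) (T b d)) (T (T (T b a) b) d)" using isoo_sym[OF Al'[OF ba b d]] .
  have 4: "isoo (T (T (T b a) b) d) (T (T b (T a b)) d)" using isoo_Tm[OF Al'[OF b a b] isoo_refl[OF d]] .
  have 5: "isoo (T (T b (T a b)) d) (T (T b U) d)" using isoo_Tm[OF isoo_Tm[OF isoo_refl[OF b] ea] isoo_refl[OF d]] .
  have 6: "isoo (T (T b U) d) (T b d)" using isoo_Tm[OF Ru'[OF b] isoo_refl[OF d]] .
  show ?thesis unfolding b_def[symmetric]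
    using isoo_trans[OF 1 isoo_trans[OF 2 isoo_trans[OF 3 isoo_trans[OF 4 isoo_trans[OF 5 isoo_trans[OF 6 eb]]]]]] .
qed

lemma R_faithful:
  assumes a: "a \<in> Obj C" and g: "g \<in> hom C y z" "g' \<in> hom C y z"
    and eq: "Tm g (Idm C a) = Tm g' (Idm C a)"
  shows "g = g'"
proof -
  obtain e where e: "iso_betw C e (T a (io a)) U" using right_inv[OF a] unfolding isoo_def by blast
  obtain \<theta> where th: "\<And>y. y\<in>Obj C \<Longrightarrow> iso_betw C (\<theta> y) (T (T y a) (io a)) y"
    and nat: "\<And>y z g. g \<in> hom C y z \<Longrightarrow> Cmp C (\<theta> z) (Tm (Tm g (Idm C a)) (Idm C (io a))) = Cmp C g (\<theta> y)"
    using R_natiso[OF a io_obj[OF a] e] by blast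
  show ?thesis
    by (rule nat_iso_faithful[where \<theta>=\<theta> and Go="\<lambda>y. T y (io a)" and Fo="\<lambda>y. T y a"
          and Gm="\<lambda>g. Tm g (Idm C (io a))" and Fm="\<lambda>g. Tm g (Idm C a)", OF th nat g eq])
qed

lemma R_full:
  assumes a: "a \<in> Obj C" and y: "y \<in> Obj C" and z: "z \<in> Obj C" and h: "h \<in> hom C (T y a) (T z a)"
  shows "\<exists>g\<in>hom C y z. Tm g (Idm C a) = h"
proof -
  obtain e where e: "iso_betw C e (T a (io a)) U" using right_inv[OF a] unfolding isoo_def by blast
  obtain \<theta> where th: "\<And>y. y\<in>Obj C \<Longrightarrow> iso_betw C (\<theta> y) (T (T y a) (io a)) y"
    and nat: "\<And>y z g. g \<in> hom C y z \<Longrightarrow> Cmp C (\<theta> z) (Tm (Tm g (Idm C a)) (Idm C (io a))) = Cmp C g (\<theta> y)"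
    using R_natiso[OF a io_obj[OF a] e] by blast
  show ?thesis
    by (rule nat_iso_full[where \<theta>=\<theta> and Go="\<lambda>y. T y (io a)" and Fo="\<lambda>y. T y a"
          and Gm="\<lambda>g. Tm g (Idm C (io a))" and Fm="\<lambda>g. Tm g (Idm C a)",
          OF R_functor[OF a] R_functor[OF io_obj[OF a]] th nat R_faithful[OF io_obj[OF a]] y z h])
qed

lemma L_faithful:
  assumes a: "a \<in> Obj C" and g: "g \<in> hom C y z" "g' \<in> hom C y z"
    and eq: "Tm (Idm C a) g = Tm (Idm C a) g'"
  shows "g = g'"
proof -
  obtain e where e: "iso_betw C e (T (io a) a) U" using left_inv[OF a] unfolding isoo_def by blast
  obtain \<theta> where th: "\<And>y. y\<in>Obj C \<Longrightarrow> iso_betw C (\<theta> y) (T (io a) (T a y)) y"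
    and nat: "\<And>y z g. g \<in> hom C y z \<Longrightarrow> Cmp C (\<theta> z) (Tm (Idm C (io a)) (Tm (Idm C a) g)) = Cmp C g (\<theta> y)"
    using L_natiso[OF a io_obj[OF a] e] by blast
  show ?thesis
    by (rule nat_iso_faithful[where \<theta>=\<theta> and Go="\<lambda>y. T (io a) y" and Fo="\<lambda>y. T a y"
          and Gm="\<lambda>g. Tm (Idm C (io a)) g" and Fm="\<lambda>g. Tm (Idm C a) g", OF th nat g eq])
qed

lemma L_full:
  assumes a: "a \<in> Obj C" and y: "y \<in> Obj C" and z: "z \<in> Obj C" and h: "h \<in> hom C (T a y) (T a z)"
  shows "\<exists>g\<in>hom C y z. Tm (Idm C a) g = h"
proof -
  obtain e where e: "iso_betw C e (T (io a) a) U" using left_inv[OF a] unfolding isoo_def by blast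
  obtain \<theta> where th: "\<And>y. y\<in>Obj C \<Longrightarrow> iso_betw C (\<theta> y) (T (io a) (T a y)) y"
    and nat: "\<And>y z g. g \<in> hom C y z \<Longrightarrow> Cmp C (\<theta> z) (Tm (Idm C (io a)) (Tm (Idm C a) g)) = Cmp C g (\<theta> y)"
    using L_natiso[OF a io_obj[OF a] e] by blast
  show ?thesis
    by (rule nat_iso_full[where \<theta>=\<theta> and Go="\<lambda>y. T (io a) y" and Fo="\<lambda>y. T a y"
          and Gm="\<lambda>g. Tm (Idm C (io a)) g" and Fm="\<lambda>g. Tm (Idm C a) g",
          OF L_functor[OF a] L_functor[OF io_obj[OF a]] th nat L_faithful[OF io_obj[OF a]] y z h])
qed

end

context category begin
lemma bij_post:
  assumes P: "P \<in> hom C B B'" and Q: "Q \<in> hom C B' B"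
    and QP: "Cmp C Q P = Idm C B" and PQ: "Cmp C P Q = Idm C B'"
    and Fh: "\<And>g. g \<in> hom C y z \<Longrightarrow> \<Phi> g \<in> hom C A B"
    and inj: "\<And>g g'. g \<in> hom C y z \<Longrightarrow> g' \<in> hom C y z \<Longrightarrow> \<Phi> g = \<Phi> g' \<Longrightarrow> g = g'"
    and full: "\<And>h. h \<in> hom C A B \<Longrightarrow> \<exists>g\<in>hom C y z. \<Phi> g = h"
    and Psi: "\<And>g. g \<in> hom C y z \<Longrightarrow> \<Psi> g = Cmp C P (\<Phi> g)"
  shows "bij_betw \<Psi> (hom C y z) (hom C A B')"
  unfolding bij_betw_def
proof (intro conjI)
  show "inj_on \<Psi> (hom C y z)"
  proof (rule inj_onI)
    fix g g' assume g: "g \<in> hom C y z" and g': "g' \<in> hom C y z" and eq: "\<Psi> g = \<Psi> g'"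
    have "\<Phi> g = Cmp C (Cmp C Q P) (\<Phi> g)" using QP id_left Fh[OF g] by simp
    also have "\<dots> = Cmp C Q (\<Psi> g)" using comp_assoc[OF Fh[OF g] P Q] Psi[OF g] by simp
    also have "\<dots> = Cmp C Q (\<Psi> g')" using eq by simp
    also have "\<dots> = Cmp C (Cmp C Q P) (\<Phi> g')" using comp_assoc[OF Fh[OF g'] P Q] Psi[OF g'] by simp
    also have "\<dots> = \<Phi> g'" using QP id_left Fh[OF g'] by simp
    finally show "g = g'" using inj[OF g g'] by simp
  qed
next
  show "\<Psi> ` hom C y z = hom C A B'"
  proof
    show "\<Psi> ` hom C y z \<subseteq> hom C A B'"
    proof
      fix h assume "h \<in> \<Psi> ` hom C y z"
      then obtain g where g: "g \<in> hom C y z" "h = \<Psi> g" by blast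
      show "h \<in> hom C A B'" using g Psi[OF g(1)] comp_hom[OF Fh[OF g(1)] P] by simp
    qed
  next
    show "hom C A B' \<subseteq> \<Psi> ` hom C y z"
    proof
      fix h assume h: "h \<in> hom C A B'"
      obtain g where g: "g \<in> hom C y z" "\<Phi> g = Cmp C Q h" using full[OF comp_hom[OF h Q]] by blast
      have "\<Psi> g = Cmp C P (Cmp C Q h)" using Psi[OF g(1)] g(2) by simp
      also have "\<dots> = h" using comp_assoc[OF h Q P] PQ id_left[OF h] by simp
      finally show "h \<in> \<Psi> ` hom C y z" using g(1) by force
    qed
  qed
qed
end

context fi begin

lemma f_iso:
  assumes f: "f \<in> hom C x x'"
  shows "\<exists>s\<in>hom C x' x. Cmp C f s = Idm C x' \<and> Cmp C s f = Idm C x"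
proof -
  have x: "x \<in> Obj C" and x': "x' \<in> Obj C" using hom_objs[OF f] by auto
  define b where "b = io x"
  define b' where "b' = io x'"
  have b: "b \<in> Obj C" and b': "b' \<in> Obj C" using io_obj x x' b_def b'_def by auto
  have imf: "im f \<in> hom C b b'" using io_fun f unfolding endofunctor_def b_def b'_def by blast
  define K where "K = Tm f (im f)"
  have Kh: "K \<in> hom C (T x b) (T x' b')" unfolding K_def using Tm_hom[OF f imf] .
  have ex: "iso_betw C (eta x) (T x b) U" and ex': "iso_betw C (eta x') (T x' b') U"
    using eta_iso x x' b_def b'_def by auto
  obtain p where p: "p \<in> hom C U (T x' b')" "Cmp C p (eta x') = Idm C (T x' b')" "Cmp C (eta x') p = Idm C U"
    using ex' unfolding iso_betw_def by blast
  have e'h: "eta x' \<in> hom C (T x' b') U" using ex' iso_hom by blast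
  have eh: "eta x \<in> hom C (T x b) U" using ex iso_hom by blast
  have pis: "iso_betw C p U (T x' b')" unfolding iso_betw_def using p e'h by blast
  have "Cmp C (eta x') K = eta x" using eta_nat f id_left[OF eh] unfolding K_def by simp
  also have "\<dots> = Cmp C (eta x') (Cmp C p (eta x))" using comp_assoc[OF eh p(1) e'h] p(3) id_left[OF eh] by simp
  finally have "K = Cmp C p (eta x)" using iso_mono[OF ex' Kh comp_hom[OF eh p(1)]] by simp
  hence Kiso: "iso_betw C K (T x b) (T x' b')" using iso_comp[OF ex pis] by simp
  obtain k where k: "k \<in> hom C (T x' b') (T x b)" "Cmp C k K = Idm C (T x b)" "Cmp C K k = Idm C (T x' b')"
    using Kiso unfolding iso_betw_def by blast
  note ix = id_hom[OF x] and ix' = id_hom[OF x'] and ib = id_hom[OF b] and ib' = id_hom[OF b']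
  have fac1: "K = Cmp C (Tm f (Idm C b')) (Tm (Idm C x) (im f))"
    using Tm_comp[OF ix f imf ib'] id_right[OF f] id_left[OF imf] unfolding K_def by simp
  have fac2: "K = Cmp C (Tm (Idm C x') (im f)) (Tm f (Idm C b))"
    using Tm_comp[OF f ix' ib imf] id_left[OF f] id_right[OF imf] unfolding K_def by simp
  have A1: "Tm f (Idm C b') \<in> hom C (T x b') (T x' b')" using Tm_hom[OF f ib'] .
  have A2: "Tm (Idm C x) (im f) \<in> hom C (T x b) (T x b')" using Tm_hom[OF ix imf] .
  have B1: "Tm (Idm C x') (im f) \<in> hom C (T x' b) (T x' b')" using Tm_hom[OF ix' imf] .
  have B2: "Tm f (Idm C b) \<in> hom C (T x b) (T x' b)" using Tm_hom[OF f ib] .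
  define r where "r = Cmp C (Tm (Idm C x) (im f)) k"
  have rh: "r \<in> hom C (T x' b') (T x b')" unfolding r_def using comp_hom[OF k(1) A2] .
  have fr: "Cmp C (Tm f (Idm C b')) r = Idm C (T x' b')"
    unfolding r_def using comp_assoc[OF k(1) A2 A1] fac1 k(3) by simp
  obtain s where s: "s \<in> hom C x' x" "Tm s (Idm C b') = r" using R_full[OF b' x' x rh] by blast
  have "Tm (Cmp C f s) (Idm C b') = Tm (Cmp C f s) (Cmp C (Idm C b') (Idm C b'))" using idid[OF b'] by simp
  also have "\<dots> = Cmp C (Tm f (Idm C b')) (Tm s (Idm C b'))" using Tm_comp[OF s(1) f ib' ib'] .
  also have "\<dots> = Tm (Idm C x') (Idm C b')" using fr s(2) Tm_id[OF x' b'] by simp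
  finally have fs: "Cmp C f s = Idm C x'" using R_faithful[OF b' comp_hom[OF s(1) f] ix'] by simp
  define r' where "r' = Cmp C k (Tm (Idm C x') (im f))"
  have r'h: "r' \<in> hom C (T x' b) (T x b)" unfolding r'_def using comp_hom[OF B1 k(1)] .
  have r'f: "Cmp C r' (Tm f (Idm C b)) = Idm C (T x b)"
    unfolding r'_def using comp_assoc[OF B2 B1 k(1)] fac2 k(2) by simp
  obtain s' where s': "s' \<in> hom C x' x" "Tm s' (Idm C b) = r'" using R_full[OF b x' x r'h] by blast
  have "Tm (Cmp C s' f) (Idm C b) = Tm (Cmp C s' f) (Cmp C (Idm C b) (Idm C b))" using idid[OF b] by simp
  also have "\<dots> = Cmp C (Tm s' (Idm C b)) (Tm f (Idm C b))" using Tm_comp[OF f s'(1) ib ib] .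
  also have "\<dots> = Tm (Idm C x) (Idm C b)" using r'f s'(2) Tm_id[OF x b] by simp
  finally have s'f: "Cmp C s' f = Idm C x" using R_faithful[OF b comp_hom[OF f s'(1)] ix] by simp
  have "s' = Cmp C s' (Cmp C f s)" using fs id_right[OF s'(1)] by simp
  also have "\<dots> = Cmp C (Cmp C s' f) s" using comp_assoc[OF s(1) f s'(1)] .
  also have "\<dots> = s" using s'f id_left[OF s(1)] by simp
  finally show ?thesis using s(1) fs s'f by blast
qed

lemma main:
  assumes f: "f \<in> hom C x x'" and y: "y \<in> Obj C" and z: "z \<in> Obj C"
  shows "bij_betw (\<lambda>g. Tm g f) (hom C y z) (hom C (T y x) (T z x')) \<and>
         bij_betw (\<lambda>g. Tm f g) (hom C y z) (hom C (T x y) (T x' z))"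
proof
  have x: "x \<in> Obj C" and x': "x' \<in> Obj C" using hom_objs[OF f] by auto
  obtain s where s: "s \<in> hom C x' x" "Cmp C f s = Idm C x'" "Cmp C s f = Idm C x" using f_iso[OF f] by blast
  note ix = id_hom[OF x] and ix' = id_hom[OF x'] and iz = id_hom[OF z]
  show "bij_betw (\<lambda>g. Tm g f) (hom C y z) (hom C (T y x) (T z x'))"
  proof (rule bij_post[where P="Tm (Idm C z) f" and Q="Tm (Idm C z) s" and \<Phi>="\<lambda>g. Tm g (Idm C x)"])
    show "Tm (Idm C z) f \<in> hom C (T z x) (T z x')" using Tm_hom[OF iz f] .
    show "Tm (Idm C z) s \<in> hom C (T z x') (T z x)" using Tm_hom[OF iz s(1)] .
    show "Cmp C (Tm (Idm C z) s) (Tm (Idm C z) f) = Idm C (T z x)"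
      using Tm_comp[OF iz iz f s(1)] idid[OF z] s(3) Tm_id[OF z x] by simp
    show "Cmp C (Tm (Idm C z) f) (Tm (Idm C z) s) = Idm C (T z x')"
      using Tm_comp[OF iz iz s(1) f] idid[OF z] s(2) Tm_id[OF z x'] by simp
    show "\<And>g. g \<in> hom C y z \<Longrightarrow> Tm g (Idm C x) \<in> hom C (T y x) (T z x)" using Tm_hom ix by blast
    show "\<And>g g'. g \<in> hom C y z \<Longrightarrow> g' \<in> hom C y z \<Longrightarrow> Tm g (Idm C x) = Tm g' (Idm C x) \<Longrightarrow> g = g'"
      using R_faithful[OF x] by blast
    show "\<And>h. h \<in> hom C (T y x) (T z x) \<Longrightarrow> \<exists>g\<in>hom C y z. Tm g (Idm C x) = h"
      using R_full[OF x y z] by blast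
    show "\<And>g. g \<in> hom C y z \<Longrightarrow> Tm g f = Cmp C (Tm (Idm C z) f) (Tm g (Idm C x))"
    proof -
      fix g assume g: "g \<in> hom C y z"
      show "Tm g f = Cmp C (Tm (Idm C z) f) (Tm g (Idm C x))"
        using Tm_comp[OF g iz ix f] id_left[OF g] id_right[OF f] by simp
    qed
  qed
  show "bij_betw (\<lambda>g. Tm f g) (hom C y z) (hom C (T x y) (T x' z))"
  proof (rule bij_post[where P="Tm f (Idm C z)" and Q="Tm s (Idm C z)" and \<Phi>="\<lambda>g. Tm (Idm C x) g"])
    show "Tm f (Idm C z) \<in> hom C (T x z) (T x' z)" using Tm_hom[OF f iz] .
    show "Tm s (Idm C z) \<in> hom C (T x' z) (T x z)" using Tm_hom[OF s(1) iz] .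
    show "Cmp C (Tm s (Idm C z)) (Tm f (Idm C z)) = Idm C (T x z)"
      using Tm_comp[OF f s(1) iz iz] idid[OF z] s(3) Tm_id[OF x z] by simp
    show "Cmp C (Tm f (Idm C z)) (Tm s (Idm C z)) = Idm C (T x' z)"
      using Tm_comp[OF s(1) f iz iz] idid[OF z] s(2) Tm_id[OF x' z] by simp
    show "\<And>g. g \<in> hom C y z \<Longrightarrow> Tm (Idm C x) g \<in> hom C (T x y) (T x z)" using Tm_hom ix by blast
    show "\<And>g g'. g \<in> hom C y z \<Longrightarrow> g' \<in> hom C y z \<Longrightarrow> Tm (Idm C x) g = Tm (Idm C x) g' \<Longrightarrow> g = g'"
      using L_faithful[OF x] by blast
    show "\<And>h. h \<in> hom C (T x y) (T x z) \<Longrightarrow> \<exists>g\<in>hom C y z. Tm (Idm C x) g = h"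
      using L_full[OF x y z] by blast
    show "\<And>g. g \<in> hom C y z \<Longrightarrow> Tm f g = Cmp C (Tm f (Idm C z)) (Tm (Idm C x) g)"
    proof -
      fix g assume g: "g \<in> hom C y z"
      show "Tm f g = Cmp C (Tm f (Idm C z)) (Tm (Idm C x) g)"
        using Tm_comp[OF ix f g iz] id_left[OF g] id_right[OF f] by simp
    qed
  qed
qed

end

theorem lemma3p14:
  fixes C :: "('o, 'm, 'x) category_scheme"
    and T :: "'o \<Rightarrow> 'o \<Rightarrow> 'o" and Tm :: "'m \<Rightarrow> 'm \<Rightarrow> 'm" and U :: 'o
    and Al :: "'o \<Rightarrow> 'o \<Rightarrow> 'o \<Rightarrow> 'm" and Lu Ru :: "'o \<Rightarrow> 'm"
    and f :: 'm and x x' :: 'o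
  assumes "monoidal_category C T Tm U Al Lu Ru"
    and "admits_functorial_inverses C T Tm U"
    and "f \<in> hom C x x'"
  shows "\<forall>y \<in> Obj C. \<forall>z \<in> Obj C.
           bij_betw (\<lambda>g. Tm g f) (hom C y z) (hom C (T y x) (T z x')) \<and>
           bij_betw (\<lambda>g. Tm f g) (hom C y z) (hom C (T x y) (T x' z))"
proof -
  obtain io im eta where F: "endofunctor C io im"
    and e1: "\<forall>x \<in> Obj C. iso_betw C (eta x) (T x (io x)) U"
    and e2: "\<forall>x x' f. f \<in> hom C x x' \<longrightarrow> Cmp C (eta x') (Tm f (im f)) = Cmp C (Idm C U) (eta x)"
    using assms(2) unfolding admits_functorial_inverses_def by blast
  interpret fi C T Tm U Al Lu Ru io im eta
    using assms(1) F e1 e2 unfolding fi_def fi_axioms_def by blast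
  show ?thesis using main[OF assms(3)] by blast
qed


end
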